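(* For fixed $\xi\in[0,e^{h\tau}]$, regard $G(\xi;\beta)$ as a set-valued function of $\beta\in[0,1]$. If $\theta^*(0)>0$ then $\beta\mapsto G(\xi;\beta)$ is non-decreasing, and if $\theta^*(0)<0$ then $\beta\mapsto G(\xi;\beta)$ is non-increasing, where a set-valued map $f$ is non-decreasing (resp. non-increasing) if $b_1<b_2$ implies $f_1\le f_2$ (resp. $f_2\le f_1$) for all $f_i\in f(b_i)$.
   Context: Let $B$ be a one-dimensional standard Brownian motion on a complete probability space $(\Omega,\mathcal F,\mathbb P)$ with augmented natural filtration $(\mathcal F_t)$. Constants $\mu,r\in\mathbb R$, $\sigma>0$, $\phi:=(\mu-r)/\sigma\neq0$; pricing kernel $Z_t=\exp(-\phi B_t-(r+\phi^2/2)t)$. Fix $\tau>0$, $\alpha\in(0,1)$, $k\ge0$, $\gamma>0$, $\delta>0$, and assume $\delta>h:=r\alpha+\frac{\alpha\phi^2}{2(1-\alpha)}$. $U(x)=x^\alpha$ for $x\ge0$, $U(x)=-k|x|^\alpha$ for $x<0$. $\mathcal Y$ is the set of $\mathcal F_\tau$-measurable $Y\ge0$ with $\mathbb E[Z_\tau Y]\le1$. $F(y;\theta):=U(y-\gamma)+\theta y^\alpha$, $\Phi(\theta):=\sup_{Y\in\mathcal Y}\mathbb E[F(Y;\theta)]$. For $\kappa\in[0,1]$, $\theta^*(\kappa)$ is the unique fixed point of the contraction $\theta\mapsto e^{-\delta\tau}\Phi(\kappa\theta)$ (it does not depend on $\beta$). For $\beta\in[0,1]$ and $\xi\in[0,e^{h\tau}]$,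 $G(\xi;\beta):=\{\mathbb E[Y^\alpha]:Y\in\arg\max_{Y\in\mathcal Y}\mathbb E[F(Y;\kappa\theta^*(\kappa))]\}$ with $\kappa=\beta/(1-(1-\beta)e^{-\delta\tau}\xi)$. *)

theory Defs
  imports "HOL-Probability.Probability"
begin

definition brownian_motion :: "'a measure \<Rightarrow> (real \<Rightarrow> 'a \<Rightarrow> real) \<Rightarrow> bool" where
  "brownian_motion M B \<longleftrightarrow>
     prob_space M \<and>
     (\<forall>t\<ge>0. B t \<in> borel_measurable M) \<and>
     (AE \<omega> in M. B 0 \<omega> = 0) \<and>
     (AE \<omega> in M. continuous_on {0..} (\<lambda>t. B t \<omega>)) \<and>
     (\<forall>s t. 0 \<le> s \<and> s < t \<longrightarrow>
        distributed M lborel (\<lambda>\<omega>. B t \<omega> - B s \<omega>) (\<lambda>x. ennreal (normal_density 0 (sqrt (t - s)) x))) \<and>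
     (\<forall>(ts :: nat \<Rightarrow> real) n. 0 \<le> ts 0 \<and> (\<forall>i<n. ts i \<le> ts (Suc i)) \<longrightarrow>
        prob_space.indep_vars M (\<lambda>_. borel) (\<lambda>i \<omega>. B (ts (Suc i)) \<omega> - B (ts i) \<omega>) {..<n})"

definition aug_nat_filtr :: "'a measure \<Rightarrow> (real \<Rightarrow> 'a \<Rightarrow> real) \<Rightarrow> real \<Rightarrow> 'a measure" where
  "aug_nat_filtr M B t = sigma (space M)
     ({B s -` A \<inter> space M | s A. 0 \<le> s \<and> s \<le> t \<and> A \<in> sets borel} \<union> null_sets M)"

definition pricing_kernel :: "(real \<Rightarrow> 'a \<Rightarrow> real) \<Rightarrow> real \<Rightarrow> real \<Rightarrow> real \<Rightarrow> 'a \<Rightarrow> real" where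
  "pricing_kernel B \<phi> r t \<omega> = exp (- \<phi> * B t \<omega> - (r + \<phi>\<^sup>2 / 2) * t)"

definition Uf :: "real \<Rightarrow> real \<Rightarrow> real \<Rightarrow> real" where
  "Uf \<alpha> k x = (if x \<ge> 0 then x powr \<alpha> else - k * \<bar>x\<bar> powr \<alpha>)"

definition admissible :: "'a measure \<Rightarrow> (real \<Rightarrow> 'a \<Rightarrow> real) \<Rightarrow> real \<Rightarrow> real \<Rightarrow> real \<Rightarrow> ('a \<Rightarrow> real) set" where
  "admissible M B \<phi> r \<tau> = {Y. Y \<in> borel_measurable (aug_nat_filtr M B \<tau>) \<and>
       (\<forall>\<omega>\<in>space M. 0 \<le> Y \<omega>) \<and>
       (\<integral>\<^sup>+ \<omega>. ennreal (pricing_kernel B \<phi> r \<tau> \<omega> * Y \<omega>) \<partial>M) \<le> 1}"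

definition Fobj :: "real \<Rightarrow> real \<Rightarrow> real \<Rightarrow> real \<Rightarrow> real \<Rightarrow> real" where
  "Fobj \<alpha> k \<gamma> \<theta> y = Uf \<alpha> k (y - \<gamma>) + \<theta> * y powr \<alpha>"

definition Phi :: "'a measure \<Rightarrow> (real \<Rightarrow> 'a \<Rightarrow> real) \<Rightarrow> real \<Rightarrow> real \<Rightarrow> real \<Rightarrow> real \<Rightarrow> real \<Rightarrow> real \<Rightarrow> real \<Rightarrow> real" where
  "Phi M B \<phi> r \<tau> \<alpha> k \<gamma> \<theta> =
     (SUP Y \<in> admissible M B \<phi> r \<tau>. (\<integral>\<omega>. Fobj \<alpha> k \<gamma> \<theta> (Y \<omega>) \<partial>M))"

definition theta_star :: "'a measure \<Rightarrow> (real \<Rightarrow> 'a \<Rightarrow> real) \<Rightarrow> real \<Rightarrow> real \<Rightarrow> real \<Rightarrow> real \<Rightarrow> real \<Rightarrow> real \<Rightarrow> real \<Rightarrow> real \<Rightarrow> real" where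
  "theta_star M B \<phi> r \<tau> \<alpha> k \<gamma> \<delta> \<kappa> =
     (THE \<theta>. \<theta> = exp (- \<delta> * \<tau>) * Phi M B \<phi> r \<tau> \<alpha> k \<gamma> (\<kappa> * \<theta>))"

definition argmax_set :: "'a measure \<Rightarrow> (real \<Rightarrow> 'a \<Rightarrow> real) \<Rightarrow> real \<Rightarrow> real \<Rightarrow> real \<Rightarrow> real \<Rightarrow> real \<Rightarrow> real \<Rightarrow> real \<Rightarrow> ('a \<Rightarrow> real) set" where
  "argmax_set M B \<phi> r \<tau> \<alpha> k \<gamma> \<theta> =
     {Y \<in> admissible M B \<phi> r \<tau>.
        \<forall>Y' \<in> admissible M B \<phi> r \<tau>. (\<integral>\<omega>. Fobj \<alpha> k \<gamma> \<theta> (Y' \<omega>) \<partial>M) \<le> (\<integral>\<omega>. Fobj \<alpha> k \<gamma> \<theta> (Y \<omega>) \<partial>M)}"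

definition Gset :: "'a measure \<Rightarrow> (real \<Rightarrow> 'a \<Rightarrow> real) \<Rightarrow> real \<Rightarrow> real \<Rightarrow> real \<Rightarrow> real \<Rightarrow> real \<Rightarrow> real \<Rightarrow> real \<Rightarrow> real \<Rightarrow> real \<Rightarrow> real set" where
  "Gset M B \<phi> r \<tau> \<alpha> k \<gamma> \<delta> \<xi> \<beta> =
     (let \<kappa> = \<beta> / (1 - (1 - \<beta>) * exp (- \<delta> * \<tau>) * \<xi>) in
      (\<lambda>Y. \<integral>\<omega>. Y \<omega> powr \<alpha> \<partial>M) ` argmax_set M B \<phi> r \<tau> \<alpha> k \<gamma> (\<kappa> * theta_star M B \<phi> r \<tau> \<alpha> k \<gamma> \<delta> \<kappa>))"

end

theory Submission
  imports Defs
begin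


definition PhiA :: "'b set \<Rightarrow> ('b \<Rightarrow> real) \<Rightarrow> ('b \<Rightarrow> real) \<Rightarrow> real \<Rightarrow> real" where
  "PhiA A u m \<theta> = (SUP Y\<in>A. u Y + \<theta> * m Y)"

locale absset =
  fixes A :: "'b set" and u m :: "'b \<Rightarrow> real" and S :: real
  assumes ne: "A \<noteq> {}" and m0: "\<And>Y. Y \<in> A \<Longrightarrow> 0 \<le> m Y" and mS: "\<And>Y. Y \<in> A \<Longrightarrow> m Y \<le> S"
    and um: "\<And>Y. Y \<in> A \<Longrightarrow> u Y \<le> m Y"
begin

lemma S0: "0 \<le> S" using ne m0 mS by force

lemma bdd: "bdd_above ((\<lambda>Y. u Y + \<theta> * m Y) ` A)"
proof (rule bdd_aboveI2)
  fix Y assume Y: "Y \<in> A"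
  have "\<theta> * m Y \<le> \<bar>\<theta>\<bar> * m Y" using m0[OF Y] by (intro mult_right_mono) auto
  also have "\<dots> \<le> \<bar>\<theta>\<bar> * S" using mS[OF Y] by (intro mult_left_mono) auto
  finally have "\<theta> * m Y \<le> \<bar>\<theta>\<bar> * S" .
  then show "u Y + \<theta> * m Y \<le> S + \<bar>\<theta>\<bar> * S" using um[OF Y] mS[OF Y] by linarith
qed

lemma upper: "Y \<in> A \<Longrightarrow> u Y + \<theta> * m Y \<le> PhiA A u m \<theta>"
  unfolding PhiA_def by (rule cSUP_upper[OF _ bdd])

lemma lip: "PhiA A u m a \<le> PhiA A u m b + \<bar>a - b\<bar> * S"
proof -
  have "PhiA A u m a \<le> PhiA A u m b + \<bar>a - b\<bar> * S"
    unfolding PhiA_def[of _ _ _ a]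
  proof (rule cSUP_least[OF ne])
    fix Y assume Y: "Y \<in> A"
    have "(a - b) * m Y \<le> \<bar>a - b\<bar> * m Y" using m0[OF Y] by (intro mult_right_mono) auto
    also have "\<dots> \<le> \<bar>a - b\<bar> * S" using mS[OF Y] by (intro mult_left_mono) auto
    finally have "(a - b) * m Y \<le> \<bar>a - b\<bar> * S" .
    then show "u Y + a * m Y \<le> PhiA A u m b + \<bar>a - b\<bar> * S"
      using upper[OF Y, of b] by (simp add: algebra_simps)
  qed
  then show ?thesis .
qed

lemma lip2: "\<bar>PhiA A u m a - PhiA A u m b\<bar> \<le> \<bar>a - b\<bar> * S"
  using lip[of a b] lip[of b a] by (simp add: abs_minus_commute abs_le_iff)

lemma mono: "a \<le> b \<Longrightarrow> PhiA A u m a \<le> PhiA A u m b"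
  unfolding PhiA_def[of _ _ _ a]
proof (rule cSUP_least[OF ne])
  fix Y assume Y: "Y \<in> A" "a \<le> b"
  have "a * m Y \<le> b * m Y" using Y m0 by (simp add: mult_right_mono)
  then show "u Y + a * m Y \<le> PhiA A u m b" using upper[OF Y(1), of b] by linarith
qed

lemma fix_ex:
  assumes e: "0 < e" "e * S < 1" and \<kappa>: "0 \<le> \<kappa>" "\<kappa> \<le> 1"
  shows "\<exists>!\<theta>. \<theta> = e * PhiA A u m (\<kappa> * \<theta>)"
proof -
  let ?f = "\<lambda>\<theta>. e * PhiA A u m (\<kappa> * \<theta>)"
  have "\<exists>!x. ?f x = x"
  proof (rule banach_fix_type[of "e * \<kappa> * S"])
    show "0 \<le> e * \<kappa> * S" using e \<kappa> S0 by simp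
    have "e * \<kappa> * S \<le> e * 1 * S" using e \<kappa> S0 by (intro mult_right_mono mult_left_mono) auto
    then show "e * \<kappa> * S < 1" using e by linarith
    show "\<forall>x y. dist (?f x) (?f y) \<le> e * \<kappa> * S * dist x y"
    proof (intro allI)
      fix x y
      have "dist (?f x) (?f y) = e * \<bar>PhiA A u m (\<kappa> * x) - PhiA A u m (\<kappa> * y)\<bar>"
        using e by (simp add: dist_real_def abs_mult flip: right_diff_distrib)
      also have "\<dots> \<le> e * (\<bar>\<kappa> * x - \<kappa> * y\<bar> * S)"
        using lip2 e by (simp add: mult_left_mono)
      also have "\<dots> = e * \<kappa> * S * dist x y"
        using \<kappa> by (simp add: dist_real_def abs_mult flip: right_diff_distrib)
      finally show "dist (?f x) (?f y) \<le> e * \<kappa> * S * dist x y" .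
    qed
  qed
  then show ?thesis by metis
qed

definition ts where "ts e \<kappa> = (THE \<theta>. \<theta> = e * PhiA A u m (\<kappa> * \<theta>))"

lemma ts_eq:
  assumes e: "0 < e" "e * S < 1" and \<kappa>: "0 \<le> \<kappa>" "\<kappa> \<le> 1"
  shows "ts e \<kappa> = e * PhiA A u m (\<kappa> * ts e \<kappa>)"
  unfolding ts_def by (rule theI'[OF fix_ex[OF assms]])

lemma ts_pos:
  assumes e: "0 < e" "e * S < 1" and \<kappa>: "0 \<le> \<kappa>" "\<kappa> \<le> 1" and p: "ts e 0 > 0"
  shows "ts e \<kappa> \<ge> ts e 0"
proof -
  have t0: "ts e 0 = e * PhiA A u m 0" using ts_eq[OF e, of 0] by simp
  let ?t = "ts e \<kappa>"
  have tk: "?t = e * PhiA A u m (\<kappa> * ?t)" by (rule ts_eq[OF assms(1-4)])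
  have nn: "?t \<ge> 0"
  proof (rule ccontr)
    assume neg: "\<not> ?t \<ge> 0"
    have "PhiA A u m 0 \<le> PhiA A u m (\<kappa> * ?t) + \<bar>0 - \<kappa> * ?t\<bar> * S" by (rule lip)
    also have "\<bar>0 - \<kappa> * ?t\<bar> = \<kappa> * (- ?t)" using neg \<kappa> by (simp add: abs_mult)
    finally have h: "PhiA A u m 0 \<le> PhiA A u m (\<kappa> * ?t) + \<kappa> * (- ?t) * S" .
    have "e * PhiA A u m 0 \<le> e * (PhiA A u m (\<kappa> * ?t) + \<kappa> * (- ?t) * S)"
      using mult_left_mono[OF h, of e] e by simp
    hence "e * PhiA A u m 0 \<le> e * PhiA A u m (\<kappa> * ?t) + e * (\<kappa> * (- ?t) * S)"
      by (simp add: right_diff_distrib)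
    hence "ts e 0 \<le> ?t + (e * \<kappa> * S) * (- ?t)" using t0 tk by (simp add: algebra_simps)
    moreover have "(e * \<kappa> * S) * (- ?t) \<le> - ?t"
    proof -
      have "e * \<kappa> * S \<le> e * 1 * S" using e \<kappa> S0 by (intro mult_right_mono mult_left_mono) auto
      then have "e * \<kappa> * S \<le> 1" using e by linarith
      then show ?thesis using neg by (simp add: mult_left_le)
    qed
    ultimately show False using p by linarith
  qed
  have "PhiA A u m 0 \<le> PhiA A u m (\<kappa> * ?t)" using nn \<kappa> by (intro mono) simp
  hence "e * PhiA A u m 0 \<le> e * PhiA A u m (\<kappa> * ?t)" using e by (intro mult_left_mono) auto
  then show ?thesis using t0 tk by linarith
qed

lemma ts_neg:
  assumes e: "0 < e" "e * S < 1" and \<kappa>: "0 \<le> \<kappa>" "\<kappa> \<le> 1" and p: "ts e 0 < 0"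
  shows "ts e \<kappa> \<le> ts e 0"
proof -
  have t0: "ts e 0 = e * PhiA A u m 0" using ts_eq[OF e, of 0] by simp
  let ?t = "ts e \<kappa>"
  have tk: "?t = e * PhiA A u m (\<kappa> * ?t)" by (rule ts_eq[OF assms(1-4)])
  have L1: "e * \<kappa> * S \<le> 1"
  proof -
    have "e * \<kappa> * S \<le> e * 1 * S" using e \<kappa> S0 by (intro mult_right_mono mult_left_mono) auto
    then show ?thesis using e by linarith
  qed
  have np: "?t \<le> 0"
  proof (rule ccontr)
    assume pos: "\<not> ?t \<le> 0"
    have "PhiA A u m (\<kappa> * ?t) \<le> PhiA A u m 0 + \<bar>\<kappa> * ?t - 0\<bar> * S" by (rule lip)
    also have "\<bar>\<kappa> * ?t - 0\<bar> = \<kappa> * ?t" using pos \<kappa> by (simp add: abs_mult)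
    finally have h: "PhiA A u m (\<kappa> * ?t) \<le> PhiA A u m 0 + \<kappa> * ?t * S" .
    have "e * PhiA A u m (\<kappa> * ?t) \<le> e * (PhiA A u m 0 + \<kappa> * ?t * S)"
      using mult_left_mono[OF h, of e] e by simp
    hence "?t \<le> ts e 0 + (e * \<kappa> * S) * ?t" using t0 tk by (simp add: algebra_simps)
    moreover have "(e * \<kappa> * S) * ?t \<le> ?t" using L1 pos by (simp add: mult_left_le)
    ultimately show False using p pos by linarith
  qed
  have "PhiA A u m (\<kappa> * ?t) \<le> PhiA A u m 0" using np \<kappa> by (intro mono) (simp add: mult_nonneg_nonpos)
  hence "e * PhiA A u m (\<kappa> * ?t) \<le> e * PhiA A u m 0" using e by (intro mult_left_mono) auto
  then show ?thesis using t0 tk by linarith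
qed

lemma ts_strict_pos:
  assumes e: "0 < e" "e * S < 1" and k: "0 \<le> k1" "k1 < k2" "k2 \<le> 1" and p: "ts e 0 > 0"
  shows "k1 * ts e k1 < k2 * ts e k2"
proof (rule ccontr)
  assume c: "\<not> ?thesis"
  define t1 where "t1 = ts e k1"
  define t2 where "t2 = ts e k2"
  have t1: "t1 = e * PhiA A u m (k1 * t1)" unfolding t1_def by (rule ts_eq) (use e k in auto)
  have t2: "t2 = e * PhiA A u m (k2 * t2)" unfolding t2_def by (rule ts_eq) (use e k in auto)
  have p1: "t1 > 0" using ts_pos[OF e, of k1] k p unfolding t1_def by auto
  have d0: "k2 * t2 \<le> k1 * t1" using c unfolding t1_def t2_def by simp
  have "PhiA A u m (k2 * t2) \<le> PhiA A u m (k1 * t1)" using d0 by (rule mono)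
  have "PhiA A u m (k1 * t1) \<le> PhiA A u m (k2 * t2) + \<bar>k1 * t1 - k2 * t2\<bar> * S" by (rule lip)
  hence "e * PhiA A u m (k1 * t1) \<le> e * (PhiA A u m (k2 * t2) + \<bar>k1 * t1 - k2 * t2\<bar> * S)"
    using e by (simp add: mult_left_mono)
  hence h: "t1 - t2 \<le> (e * S) * (k1 * t1 - k2 * t2)" using t1 t2 d0 by (simp add: algebra_simps)
  have "(e * S) * (k1 * t1 - k2 * t2) \<le> k1 * t1 - k2 * t2" using e d0 S0 by (intro mult_left_le_one_le) auto
  moreover have "k1 * t1 < k2 * t1" using k p1 by simp
  moreover have "k2 * t1 - k2 * t2 \<le> t1 - t2"
  proof -
    have "t2 \<le> t1"
    proof (rule ccontr)
      assume "\<not> t2 \<le> t1"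
      hence "k2 * (t1 - t2) \<le> 0" using k by (intro mult_nonneg_nonpos) auto
      thus False using d0 \<open>k1 * t1 < k2 * t1\<close> by (simp add: right_diff_distrib)
    qed
    hence "k2 * (t1 - t2) \<le> t1 - t2" using k by (intro mult_left_le_one_le) auto
    then show ?thesis by (simp add: right_diff_distrib)
  qed
  ultimately show False using h by linarith
qed

lemma ts_strict_neg:
  assumes e: "0 < e" "e * S < 1" and k: "0 \<le> k1" "k1 < k2" "k2 \<le> 1" and p: "ts e 0 < 0"
  shows "k2 * ts e k2 < k1 * ts e k1"
proof (rule ccontr)
  assume c: "\<not> ?thesis"
  define t1 where "t1 = ts e k1"
  define t2 where "t2 = ts e k2"
  have t1: "t1 = e * PhiA A u m (k1 * t1)" unfolding t1_def by (rule ts_eq) (use e k in auto)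
  have t2: "t2 = e * PhiA A u m (k2 * t2)" unfolding t2_def by (rule ts_eq) (use e k in auto)
  have p1: "t1 < 0" using ts_neg[OF e, of k1] k p unfolding t1_def by auto
  have d0: "k1 * t1 \<le> k2 * t2" using c unfolding t1_def t2_def by simp
  have "PhiA A u m (k2 * t2) \<le> PhiA A u m (k1 * t1) + \<bar>k2 * t2 - k1 * t1\<bar> * S" by (rule lip)
  hence "e * PhiA A u m (k2 * t2) \<le> e * (PhiA A u m (k1 * t1) + \<bar>k2 * t2 - k1 * t1\<bar> * S)"
    using e by (simp add: mult_left_mono)
  hence h: "t2 - t1 \<le> (e * S) * (k2 * t2 - k1 * t1)" using t1 t2 d0 by (simp add: algebra_simps)
  have "(e * S) * (k2 * t2 - k1 * t1) \<le> k2 * t2 - k1 * t1" using e d0 S0 by (intro mult_left_le_one_le) auto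
  moreover have "k2 * t1 < k1 * t1" using k p1 by simp
  moreover have "k2 * t2 - k2 * t1 \<le> t2 - t1"
  proof -
    have "t1 \<le> t2"
    proof (rule ccontr)
      assume "\<not> t1 \<le> t2"
      hence "k2 * (t2 - t1) \<le> 0" using k by (intro mult_nonneg_nonpos) auto
      thus False using d0 \<open>k2 * t1 < k1 * t1\<close> by (simp add: right_diff_distrib)
    qed
    hence "k2 * (t2 - t1) \<le> t2 - t1" using k by (intro mult_left_le_one_le) auto
    then show ?thesis by (simp add: right_diff_distrib)
  qed
  ultimately show False using h by linarith
qed

end

lemma comp_stat:
  fixes u m :: "'b \<Rightarrow> real"
  assumes "\<theta>a < \<theta>b"
    and a: "Ya \<in> A" "\<forall>Y'\<in>A. u Y' + \<theta>a * m Y' \<le> u Ya + \<theta>a * m Ya"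
    and b: "Yb \<in> A" "\<forall>Y'\<in>A. u Y' + \<theta>b * m Y' \<le> u Yb + \<theta>b * m Yb"
  shows "m Ya \<le> m Yb"
proof -
  have 1: "u Yb + \<theta>a * m Yb \<le> u Ya + \<theta>a * m Ya" using a b by auto
  have 2: "u Ya + \<theta>b * m Ya \<le> u Yb + \<theta>b * m Yb" using a b by auto
  have "(\<theta>b - \<theta>a) * (m Ya - m Yb) \<le> 0" using 1 2 by (simp add: algebra_simps)
  then show ?thesis using assms(1) by (simp add: mult_le_0_iff)
qed



lemma gauss_mgf:
  assumes s: "s > 0"
  shows "(\<integral>\<^sup>+x. ennreal (normal_density 0 s x) * ennreal (exp (t * x)) \<partial>lborel) = ennreal (exp (t^2 * s^2 / 2))"
proof -
  have pt: "normal_density 0 s x * exp (t * x) = exp (t^2 * s^2 / 2) * normal_density (t * s^2) s x" for x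
  proof -
    have "- (x - 0)\<^sup>2 / (2 * s\<^sup>2) + t * x = t^2 * s^2 / 2 + (- (x - t * s^2)\<^sup>2 / (2 * s\<^sup>2))"
      using s by (simp add: field_simps power2_eq_square)
    then show ?thesis unfolding normal_density_def
      by (simp add: mult_exp_exp mult.assoc mult.left_commute[of "exp _"])
  qed
  have "(\<integral>\<^sup>+x. ennreal (normal_density 0 s x) * ennreal (exp (t * x)) \<partial>lborel)
      = (\<integral>\<^sup>+x. ennreal (exp (t^2 * s^2 / 2)) * ennreal (normal_density (t * s^2) s x) \<partial>lborel)"
    by (intro nn_integral_cong) (simp add: pt normal_density_nonneg flip: ennreal_mult)
  also have "\<dots> = ennreal (exp (t^2 * s^2 / 2)) * (\<integral>\<^sup>+x. ennreal (normal_density (t * s^2) s x) \<partial>lborel)"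
    by (rule nn_integral_cmult) simp
  also have "(\<integral>\<^sup>+x. ennreal (normal_density (t * s^2) s x) \<partial>lborel) = 1"
    by (subst nn_integral_eq_integral) (auto simp: normal_density_nonneg integrable_normal_density[OF s] integral_normal_density[OF s])
  finally show ?thesis by simp
qed

lemma adm_meas:
  assumes BM: "brownian_motion M B" and Y: "Y \<in> admissible M B ph r \<tau>"
  shows "Y \<in> borel_measurable M"
proof -
  have Bm: "\<And>t. t \<ge> 0 \<Longrightarrow> B t \<in> borel_measurable M" using BM unfolding brownian_motion_def by auto
  let ?G = "{B s -` A \<inter> space M | s A. 0 \<le> s \<and> s \<le> \<tau> \<and> A \<in> sets borel} \<union> null_sets M"
  have G: "?G \<subseteq> sets M" using Bm by (auto intro: measurable_sets)
  have sub: "subalgebra M (aug_nat_filtr M B \<tau>)"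
    unfolding subalgebra_def aug_nat_filtr_def
  proof
    have Gp: "?G \<subseteq> Pow (space M)" using G sets.sets_into_space by blast
    show "space (sigma (space M) ?G) = space M" using Gp by (simp add: space_measure_of_conv)
    show "sets (sigma (space M) ?G) \<subseteq> sets M" using G Gp
      by (subst sets_measure_of) (auto intro!: sets.sigma_sets_subset)
  qed
  show ?thesis using Y unfolding admissible_def by (auto intro: measurable_from_subalg[OF sub])
qed

lemma expid:
  fixes \<alpha> r ph \<tau> :: real
  assumes "0 < \<alpha>" "\<alpha> < 1"
  shows "-(\<alpha> / (1 - \<alpha>)) * ((r * \<alpha> + \<alpha> * ph\<^sup>2 / (2 * (1 - \<alpha>))) * \<tau>) + ((\<alpha> / (1 - \<alpha>)) * (r + ph\<^sup>2 / 2) * \<tau> + ((\<alpha> / (1 - \<alpha>)) * ph)^2 * \<tau> / 2) = (r * \<alpha> + \<alpha> * ph\<^sup>2 / (2 * (1 - \<alpha>))) * \<tau>"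
proof -
  define q where "q = 1 - \<alpha>"
  have q: "q > 0" using assms unfolding q_def by auto
  define p where "p = \<alpha> / q"
  define h where "h = r * \<alpha> + \<alpha> * ph\<^sup>2 / (2 * q)"
  have p1: "1 + p = 1 / q" unfolding p_def q_def using assms by (simp add: field_simps)
  have hh: "h * (1 + p) = p * r + p * (1 + p) * ph\<^sup>2 / 2"
    unfolding p1 unfolding h_def p_def using q by (simp add: field_simps power2_eq_square)
  have "-p * (h * \<tau>) + (p * (r + ph\<^sup>2 / 2) * \<tau> + (p * ph)^2 * \<tau> / 2) - h * \<tau>
     = \<tau> * (p * r + p * (1 + p) * ph\<^sup>2 / 2 - h * (1 + p))"
    by (simp add: algebra_simps power2_eq_square)
  also have "\<dots> = 0" using hh by simp
  finally show ?thesis unfolding p_def h_def q_def by simp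
qed

lemma moment_bound:
  assumes BM: "brownian_motion M B" and \<tau>: "\<tau> > 0" and \<alpha>: "0 < \<alpha>" "\<alpha> < 1"
    and Y: "Y \<in> admissible M B ph r \<tau>"
  shows "(\<integral>\<^sup>+\<omega>. ennreal (Y \<omega> powr \<alpha>) \<partial>M) \<le> ennreal (exp ((r * \<alpha> + \<alpha> * ph\<^sup>2 / (2 * (1 - \<alpha>))) * \<tau>))"
proof -
  define h where "h = r * \<alpha> + \<alpha> * ph\<^sup>2 / (2 * (1 - \<alpha>))"
  define p where "p = \<alpha> / (1 - \<alpha>)"
  define c where "c = exp (h * \<tau>)"
  define Z where "Z = pricing_kernel B ph r \<tau>"
  have c0: "c > 0" unfolding c_def by simp
  have Bm[measurable]: "B \<tau> \<in> borel_measurable M" using BM \<tau> unfolding brownian_motion_def by auto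
  have B0[measurable]: "B 0 \<in> borel_measurable M" using BM unfolding brownian_motion_def by auto
  have Ym[measurable]: "Y \<in> borel_measurable M" by (rule adm_meas[OF BM Y])
  have Zm[measurable]: "Z \<in> borel_measurable M" unfolding Z_def pricing_kernel_def[abs_def] by measurable
  have Z0: "Z \<omega> > 0" for \<omega> unfolding Z_def pricing_kernel_def by simp
  have Y0: "\<omega> \<in> space M \<Longrightarrow> 0 \<le> Y \<omega>" for \<omega> using Y unfolding admissible_def by auto
  have ZY: "(\<integral>\<^sup>+\<omega>. ennreal (Z \<omega> * Y \<omega>) \<partial>M) \<le> 1" using Y unfolding admissible_def Z_def by auto
  have pt: "Y \<omega> powr \<alpha> \<le> \<alpha> * c * (Z \<omega> * Y \<omega>) + (1 - \<alpha>) * (c powr (-p)) * Z \<omega> powr (-p)"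
    if \<omega>: "\<omega> \<in> space M" for \<omega>
  proof (cases "Y \<omega> = 0")
    case True
    then show ?thesis using \<alpha> c0 Z0[of \<omega>] by simp
  next
    case False
    hence Yp: "Y \<omega> > 0" using Y0[OF \<omega>] by simp
    have a: "c * (Z \<omega> * Y \<omega>) > 0" using c0 Z0[of \<omega>] Yp by simp
    have b: "c powr (-p) * Z \<omega> powr (-p) > 0" using c0 Z0[of \<omega>] by simp
    have p1: "- (p * (1 - \<alpha>)) = - \<alpha>" unfolding p_def using \<alpha> by simp
    have "(c * (Z \<omega> * Y \<omega>)) powr \<alpha> * (c powr (-p) * Z \<omega> powr (-p)) powr (1 - \<alpha>)
        = (c powr \<alpha> * c powr (-\<alpha>)) * (Z \<omega> powr \<alpha> * Z \<omega> powr (-\<alpha>)) * Y \<omega> powr \<alpha>"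
      using c0 Z0[of \<omega>] Yp by (simp add: powr_mult powr_powr p1 mult_ac)
    also have "\<dots> = Y \<omega> powr \<alpha>" using c0 Z0[of \<omega>] by (simp flip: powr_add)
    finally have eq: "(c * (Z \<omega> * Y \<omega>)) powr \<alpha> * (c powr (-p) * Z \<omega> powr (-p)) powr (1 - \<alpha>) = Y \<omega> powr \<alpha>" .
    have "(c * (Z \<omega> * Y \<omega>)) powr \<alpha> * (c powr (-p) * Z \<omega> powr (-p)) powr (1 - \<alpha>)
        \<le> \<alpha> * (c * (Z \<omega> * Y \<omega>)) + (1 - \<alpha>) * (c powr (-p) * Z \<omega> powr (-p))"
      by (rule Youngs_inequality_0) (use \<alpha> a b in auto)
    then show ?thesis using eq by (simp add: mult_ac)
  qed
  have Zp: "Z \<omega> powr (-p) = exp (p * (r + ph\<^sup>2 / 2) * \<tau>) * exp ((p * ph) * B \<tau> \<omega>)" for \<omega>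
    unfolding Z_def pricing_kernel_def powr_def by (simp add: mult_exp_exp algebra_simps)
  have dist: "distributed M lborel (\<lambda>\<omega>. B \<tau> \<omega> - B 0 \<omega>) (\<lambda>x. ennreal (normal_density 0 (sqrt (\<tau> - 0)) x))"
    using BM \<tau> unfolding brownian_motion_def by (metis order_refl)
  have AE0: "AE \<omega> in M. B 0 \<omega> = 0" using BM unfolding brownian_motion_def by auto
  have "(\<integral>\<^sup>+\<omega>. ennreal (exp ((p * ph) * B \<tau> \<omega>)) \<partial>M) = (\<integral>\<^sup>+\<omega>. ennreal (exp ((p * ph) * (B \<tau> \<omega> - B 0 \<omega>))) \<partial>M)"
    by (rule nn_integral_cong_AE) (use AE0 in auto)
  also have "\<dots> = (\<integral>\<^sup>+x. ennreal (normal_density 0 (sqrt \<tau>) x) * ennreal (exp ((p * ph) * x)) \<partial>lborel)"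
    using distributed_nn_integral[OF dist, of "\<lambda>x. ennreal (exp ((p * ph) * x))"] by simp
  also have "\<dots> = ennreal (exp ((p * ph)^2 * (sqrt \<tau>)^2 / 2))" by (rule gauss_mgf) (use \<tau> in simp)
  finally have I2a: "(\<integral>\<^sup>+\<omega>. ennreal (exp ((p * ph) * B \<tau> \<omega>)) \<partial>M) = ennreal (exp ((p * ph)^2 * \<tau> / 2))"
    using \<tau> by simp
  define E where "E = exp (p * (r + ph\<^sup>2 / 2) * \<tau>) * exp ((p * ph)^2 * \<tau> / 2)"
  have I2: "(\<integral>\<^sup>+\<omega>. ennreal (Z \<omega> powr (-p)) \<partial>M) = ennreal E"
  proof -
    have "(\<integral>\<^sup>+\<omega>. ennreal (Z \<omega> powr (-p)) \<partial>M) = (\<integral>\<^sup>+\<omega>. ennreal (exp (p * (r + ph\<^sup>2 / 2) * \<tau>)) * ennreal (exp ((p * ph) * B \<tau> \<omega>)) \<partial>M)"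
      by (intro nn_integral_cong) (simp add: Zp ennreal_mult)
    also have "\<dots> = ennreal (exp (p * (r + ph\<^sup>2 / 2) * \<tau>)) * (\<integral>\<^sup>+\<omega>. ennreal (exp ((p * ph) * B \<tau> \<omega>)) \<partial>M)"
      by (rule nn_integral_cmult) simp
    finally show ?thesis unfolding I2a E_def by (simp add: ennreal_mult)
  qed
  have key: "c powr (-p) * E = c"
  proof -
    have "-p * (h * \<tau>) + (p * (r + ph\<^sup>2 / 2) * \<tau> + (p * ph)^2 * \<tau> / 2) = h * \<tau>"
      unfolding p_def h_def using expid[OF \<alpha>, of r ph \<tau>] by simp
    then show ?thesis unfolding c_def E_def powr_def by (simp add: mult_exp_exp)
  qed
  have "(\<integral>\<^sup>+\<omega>. ennreal (Y \<omega> powr \<alpha>) \<partial>M)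
      \<le> (\<integral>\<^sup>+\<omega>. ennreal (\<alpha> * c) * ennreal (Z \<omega> * Y \<omega>) + ennreal ((1 - \<alpha>) * (c powr (-p))) * ennreal (Z \<omega> powr (-p)) \<partial>M)"
  proof (intro nn_integral_mono)
    fix \<omega> assume \<omega>: "\<omega> \<in> space M"
    have "ennreal (Y \<omega> powr \<alpha>) \<le> ennreal (\<alpha> * c * (Z \<omega> * Y \<omega>) + (1 - \<alpha>) * (c powr (-p)) * Z \<omega> powr (-p))"
      using pt[OF \<omega>] by (rule ennreal_leI)
    also have "\<dots> = ennreal (\<alpha> * c * (Z \<omega> * Y \<omega>)) + ennreal ((1 - \<alpha>) * (c powr (-p)) * Z \<omega> powr (-p))"
      using \<alpha> c0 Z0[of \<omega>] Y0[OF \<omega>] by (intro ennreal_plus) auto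
    also have "ennreal (\<alpha> * c * (Z \<omega> * Y \<omega>)) = ennreal (\<alpha> * c) * ennreal (Z \<omega> * Y \<omega>)"
      using \<alpha> c0 Z0[of \<omega>] Y0[OF \<omega>] by (intro ennreal_mult) auto
    also have "ennreal ((1 - \<alpha>) * (c powr (-p)) * Z \<omega> powr (-p)) = ennreal ((1 - \<alpha>) * (c powr (-p))) * ennreal (Z \<omega> powr (-p))"
      using \<alpha> c0 Z0[of \<omega>] by (intro ennreal_mult) auto
    finally show "ennreal (Y \<omega> powr \<alpha>) \<le> ennreal (\<alpha> * c) * ennreal (Z \<omega> * Y \<omega>) + ennreal ((1 - \<alpha>) * (c powr (-p))) * ennreal (Z \<omega> powr (-p))" .
  qed
  also have "\<dots> = ennreal (\<alpha> * c) * (\<integral>\<^sup>+\<omega>. ennreal (Z \<omega> * Y \<omega>) \<partial>M) + ennreal ((1 - \<alpha>) * (c powr (-p))) * (\<integral>\<^sup>+\<omega>. ennreal (Z \<omega> powr (-p)) \<partial>M)"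
    by (subst nn_integral_add) (auto simp: nn_integral_cmult)
  also have "\<dots> \<le> ennreal (\<alpha> * c) * 1 + ennreal ((1 - \<alpha>) * (c powr (-p))) * ennreal E"
    unfolding I2 by (intro add_mono mult_left_mono ZY) auto
  also have "\<dots> = ennreal (\<alpha> * c + (1 - \<alpha>) * (c powr (-p) * E))"
  proof -
    have E0: "E \<ge> 0" unfolding E_def by simp
    have "ennreal (\<alpha> * c) * 1 + ennreal ((1 - \<alpha>) * (c powr (-p))) * ennreal E
        = ennreal (\<alpha> * c) + ennreal ((1 - \<alpha>) * (c powr (-p)) * E)"
      using \<alpha> c0 E0 by (simp add: ennreal_mult)
    also have "\<dots> = ennreal (\<alpha> * c + (1 - \<alpha>) * (c powr (-p)) * E)"
      using \<alpha> c0 E0 by (intro ennreal_plus[symmetric]) auto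
    finally show ?thesis by (simp add: mult.assoc)
  qed
  also have "\<dots> = ennreal c" unfolding key by (simp add: algebra_simps)
  finally show ?thesis unfolding c_def h_def .
qed


lemma Uf_bounds:
  assumes y: "0 \<le> y" and \<alpha>: "0 < \<alpha>" and k: "0 \<le> k" and \<gamma>: "0 < \<gamma>"
  shows "Uf \<alpha> k (y - \<gamma>) \<le> y powr \<alpha>" "\<bar>Uf \<alpha> k (y - \<gamma>)\<bar> \<le> k * \<gamma> powr \<alpha> + y powr \<alpha>"
proof -
  have "Uf \<alpha> k (y - \<gamma>) \<le> y powr \<alpha> \<and> \<bar>Uf \<alpha> k (y - \<gamma>)\<bar> \<le> k * \<gamma> powr \<alpha> + y powr \<alpha>"
  proof (cases "y - \<gamma> \<ge> 0")
    case True
    have "(y - \<gamma>) powr \<alpha> \<le> y powr \<alpha>" using True \<alpha> \<gamma> by (intro powr_mono2) auto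
    moreover have "0 \<le> k * \<gamma> powr \<alpha>" using k by simp
    ultimately show ?thesis using True unfolding Uf_def by simp
  next
    case False
    have "\<bar>y - \<gamma>\<bar> powr \<alpha> \<le> \<gamma> powr \<alpha>" using False \<alpha> \<gamma> y by (intro powr_mono2) auto
    hence "k * \<bar>y - \<gamma>\<bar> powr \<alpha> \<le> k * \<gamma> powr \<alpha>" using k by (rule mult_left_mono)
    moreover have "0 \<le> k * \<bar>y - \<gamma>\<bar> powr \<alpha>" using k by simp
    moreover have yp: "0 \<le> y powr \<alpha>" by simp
    moreover have eq: "Uf \<alpha> k (y - \<gamma>) = - (k * \<bar>y - \<gamma>\<bar> powr \<alpha>)" using False unfolding Uf_def by simp
    moreover have "\<bar>Uf \<alpha> k (y - \<gamma>)\<bar> = k * \<bar>y - \<gamma>\<bar> powr \<alpha>" unfolding eq using k by simp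
    ultimately show ?thesis by linarith
  qed
  then show "Uf \<alpha> k (y - \<gamma>) \<le> y powr \<alpha>" "\<bar>Uf \<alpha> k (y - \<gamma>)\<bar> \<le> k * \<gamma> powr \<alpha> + y powr \<alpha>" by auto
qed

lemma adm_facts:
  assumes BM: "brownian_motion M B" and \<tau>: "\<tau> > 0" and \<alpha>: "0 < \<alpha>" "\<alpha> < 1"
    and k: "0 \<le> k" and \<gamma>: "0 < \<gamma>"
    and Y: "Y \<in> admissible M B ph r \<tau>"
  shows "0 \<le> (\<integral>\<omega>. Y \<omega> powr \<alpha> \<partial>M)"
    "(\<integral>\<omega>. Y \<omega> powr \<alpha> \<partial>M) \<le> exp ((r * \<alpha> + \<alpha> * ph\<^sup>2 / (2 * (1 - \<alpha>))) * \<tau>)"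
    "(\<integral>\<omega>. Uf \<alpha> k (Y \<omega> - \<gamma>) \<partial>M) \<le> (\<integral>\<omega>. Y \<omega> powr \<alpha> \<partial>M)"
    "(\<integral>\<omega>. Fobj \<alpha> k \<gamma> \<theta> (Y \<omega>) \<partial>M) = (\<integral>\<omega>. Uf \<alpha> k (Y \<omega> - \<gamma>) \<partial>M) + \<theta> * (\<integral>\<omega>. Y \<omega> powr \<alpha> \<partial>M)"
proof -
  interpret prob_space M using BM unfolding brownian_motion_def by auto
  have Ym[measurable]: "Y \<in> borel_measurable M" by (rule adm_meas[OF BM Y])
  have Y0: "\<omega> \<in> space M \<Longrightarrow> 0 \<le> Y \<omega>" for \<omega> using Y unfolding admissible_def by auto
  define S where "S = exp ((r * \<alpha> + \<alpha> * ph\<^sup>2 / (2 * (1 - \<alpha>))) * \<tau>)"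
  have nn: "(\<integral>\<^sup>+\<omega>. ennreal (Y \<omega> powr \<alpha>) \<partial>M) \<le> ennreal S"
    unfolding S_def by (rule moment_bound[OF BM \<tau> \<alpha> Y])
  have Pm[measurable]: "(\<lambda>\<omega>. Y \<omega> powr \<alpha>) \<in> borel_measurable M" by measurable
  have IY: "integrable M (\<lambda>\<omega>. Y \<omega> powr \<alpha>)"
  proof (rule integrableI_bounded)
    show "(\<integral>\<^sup>+\<omega>. ennreal (norm (Y \<omega> powr \<alpha>)) \<partial>M) < \<infinity>"
      using nn by (simp add: le_less_trans)
  qed simp
  show "0 \<le> (\<integral>\<omega>. Y \<omega> powr \<alpha> \<partial>M)" by simp
  have "(\<integral>\<omega>. Y \<omega> powr \<alpha> \<partial>M) = enn2real (\<integral>\<^sup>+\<omega>. ennreal (Y \<omega> powr \<alpha>) \<partial>M)"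
    by (rule integral_eq_nn_integral) auto
  also have "\<dots> \<le> S" using nn by (intro enn2real_leI) (auto simp: S_def)
  finally show "(\<integral>\<omega>. Y \<omega> powr \<alpha> \<partial>M) \<le> exp ((r * \<alpha> + \<alpha> * ph\<^sup>2 / (2 * (1 - \<alpha>))) * \<tau>)"
    unfolding S_def .
  have Um[measurable]: "(\<lambda>\<omega>. Uf \<alpha> k (Y \<omega> - \<gamma>)) \<in> borel_measurable M"
    unfolding Uf_def by measurable
  have IU: "integrable M (\<lambda>\<omega>. Uf \<alpha> k (Y \<omega> - \<gamma>))"
  proof (rule Bochner_Integration.integrable_bound)
    show "integrable M (\<lambda>\<omega>. k * \<gamma> powr \<alpha> + Y \<omega> powr \<alpha>)" using IY by simp
    show "AE \<omega> in M. norm (Uf \<alpha> k (Y \<omega> - \<gamma>)) \<le> norm (k * \<gamma> powr \<alpha> + Y \<omega> powr \<alpha>)"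
    proof (intro AE_I2)
      fix \<omega> assume \<omega>: "\<omega> \<in> space M"
      have "0 \<le> k * \<gamma> powr \<alpha> + Y \<omega> powr \<alpha>" using k by simp
      then show "norm (Uf \<alpha> k (Y \<omega> - \<gamma>)) \<le> norm (k * \<gamma> powr \<alpha> + Y \<omega> powr \<alpha>)"
        using Uf_bounds(2)[OF Y0[OF \<omega>] \<alpha>(1) k \<gamma>] by simp
    qed
  qed simp
  show "(\<integral>\<omega>. Uf \<alpha> k (Y \<omega> - \<gamma>) \<partial>M) \<le> (\<integral>\<omega>. Y \<omega> powr \<alpha> \<partial>M)"
    using IU IY Uf_bounds(1)[OF Y0 \<alpha>(1) k \<gamma>] by (intro integral_mono) auto
  show "(\<integral>\<omega>. Fobj \<alpha> k \<gamma> \<theta> (Y \<omega>) \<partial>M) = (\<integral>\<omega>. Uf \<alpha> k (Y \<omega> - \<gamma>) \<partial>M) + \<theta> * (\<integral>\<omega>. Y \<omega> powr \<alpha> \<partial>M)"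
    unfolding Fobj_def using IU IY by simp
qed

lemma zero_adm:
  assumes BM: "brownian_motion M B"
  shows "(\<lambda>_. 0) \<in> admissible M B ph r \<tau>"
  unfolding admissible_def by simp


lemma kappa_props:
  fixes c b1 b2 :: real
  assumes c: "0 \<le> c" "c < 1" and b: "0 \<le> b1" "b1 < b2" "b2 \<le> 1"
  shows "0 \<le> b1 / (1 - (1 - b1) * c)" "b1 / (1 - (1 - b1) * c) < b2 / (1 - (1 - b2) * c)"
    "b2 / (1 - (1 - b2) * c) \<le> 1"
proof -
  have D: "1 - (1 - b) * c \<ge> 1 - c" if "0 \<le> b" "b \<le> 1" for b
  proof -
    have "(1 - b) * c \<le> 1 * c" using that c by (intro mult_right_mono) auto
    then show ?thesis by simp
  qed
  have D1: "1 - (1 - b1) * c > 0" using D[of b1] b c by auto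
  have D2: "1 - (1 - b2) * c > 0" using D[of b2] b c by auto
  show "0 \<le> b1 / (1 - (1 - b1) * c)" using D1 b by simp
  have "b2 / (1 - (1 - b2) * c) - b1 / (1 - (1 - b1) * c)
      = (b2 * (1 - (1 - b1) * c) - b1 * (1 - (1 - b2) * c)) / ((1 - (1 - b2) * c) * (1 - (1 - b1) * c))"
    using D1 D2 by (simp add: field_simps)
  also have "b2 * (1 - (1 - b1) * c) - b1 * (1 - (1 - b2) * c) = (b2 - b1) * (1 - c)"
    by (simp add: algebra_simps)
  finally have "b2 / (1 - (1 - b2) * c) - b1 / (1 - (1 - b1) * c) = (b2 - b1) * (1 - c) / ((1 - (1 - b2) * c) * (1 - (1 - b1) * c))" .
  moreover have "(b2 - b1) * (1 - c) / ((1 - (1 - b2) * c) * (1 - (1 - b1) * c)) > 0"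
    using b c D1 D2 by simp
  ultimately show "b1 / (1 - (1 - b1) * c) < b2 / (1 - (1 - b2) * c)" by linarith
  have "(1 - b2) * c \<le> (1 - b2) * 1" using b c by (intro mult_left_mono) auto
  then have "b2 \<le> 1 - (1 - b2) * c" by simp
  then show "b2 / (1 - (1 - b2) * c) \<le> 1" using D2 by simp
qed

theorem lemmaA10:
  fixes M :: "'a measure" and B :: "real \<Rightarrow> 'a \<Rightarrow> real"
    and \<mu> r \<sigma> \<tau> \<alpha> k \<gamma> \<delta> \<xi> :: real
  assumes BM: "brownian_motion M B"
    and compl: "complete_measure M"
    and \<sigma>_pos: "\<sigma> > 0"
    and \<phi>_nz: "(\<mu> - r) / \<sigma> \<noteq> 0"
    and \<tau>_pos: "\<tau> > 0"
    and \<alpha>: "0 < \<alpha>" "\<alpha> < 1"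
    and k: "k \<ge> 0"
    and \<gamma>: "\<gamma> > 0"
    and \<delta>: "\<delta> > 0"
    and \<delta>_h: "\<delta> > r * \<alpha> + \<alpha> * ((\<mu> - r) / \<sigma>)\<^sup>2 / (2 * (1 - \<alpha>))"
    and \<xi>: "0 \<le> \<xi>" "\<xi> \<le> exp ((r * \<alpha> + \<alpha> * ((\<mu> - r) / \<sigma>)\<^sup>2 / (2 * (1 - \<alpha>))) * \<tau>)"
  shows
    "(theta_star M B ((\<mu> - r) / \<sigma>) r \<tau> \<alpha> k \<gamma> \<delta> 0 > 0 \<longrightarrow>
       (\<forall>\<beta>1 \<beta>2 g1 g2. 0 \<le> \<beta>1 \<and> \<beta>1 < \<beta>2 \<and> \<beta>2 \<le> 1 \<and>
          g1 \<in> Gset M B ((\<mu> - r) / \<sigma>) r \<tau> \<alpha> k \<gamma> \<delta> \<xi> \<beta>1 \<and>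
          g2 \<in> Gset M B ((\<mu> - r) / \<sigma>) r \<tau> \<alpha> k \<gamma> \<delta> \<xi> \<beta>2 \<longrightarrow> g1 \<le> g2))
   \<and> (theta_star M B ((\<mu> - r) / \<sigma>) r \<tau> \<alpha> k \<gamma> \<delta> 0 < 0 \<longrightarrow>
       (\<forall>\<beta>1 \<beta>2 g1 g2. 0 \<le> \<beta>1 \<and> \<beta>1 < \<beta>2 \<and> \<beta>2 \<le> 1 \<and>
          g1 \<in> Gset M B ((\<mu> - r) / \<sigma>) r \<tau> \<alpha> k \<gamma> \<delta> \<xi> \<beta>1 \<and>
          g2 \<in> Gset M B ((\<mu> - r) / \<sigma>) r \<tau> \<alpha> k \<gamma> \<delta> \<xi> \<beta>2 \<longrightarrow> g2 \<le> g1))"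
  proof -
  define ph where "ph = (\<mu> - r) / \<sigma>"
  define h where "h = r * \<alpha> + \<alpha> * ph\<^sup>2 / (2 * (1 - \<alpha>))"
  define A where "A = admissible M B ph r \<tau>"
  define u where "u = (\<lambda>Y. \<integral>\<omega>. Uf \<alpha> k (Y \<omega> - \<gamma>) \<partial>M)"
  define m where "m = (\<lambda>Y::'a \<Rightarrow> real. \<integral>\<omega>. Y \<omega> powr \<alpha> \<partial>M)"
  define S where "S = exp (h * \<tau>)"
  define e where "e = exp (- \<delta> * \<tau>)"
  have af: "\<And>Y \<theta>. Y \<in> A \<Longrightarrow> 0 \<le> m Y \<and> m Y \<le> S \<and> u Y \<le> m Y \<and>
      (\<integral>\<omega>. Fobj \<alpha> k \<gamma> \<theta> (Y \<omega>) \<partial>M) = u Y + \<theta> * m Y"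
    unfolding A_def u_def m_def S_def h_def
    using adm_facts[OF BM \<tau>_pos \<alpha> k \<gamma>] by blast
  interpret absset A u m S
  proof
    show "A \<noteq> {}" unfolding A_def using zero_adm[OF BM] by blast
  qed (use af in auto)
  have PhiEq: "Phi M B ph r \<tau> \<alpha> k \<gamma> = PhiA A u m"
  proof
    fix \<theta>
    show "Phi M B ph r \<tau> \<alpha> k \<gamma> \<theta> = PhiA A u m \<theta>"
      unfolding Phi_def PhiA_def A_def[symmetric] using af by (intro SUP_cong) auto
  qed
  have tsEq: "theta_star M B ph r \<tau> \<alpha> k \<gamma> \<delta> \<kappa> = ts e \<kappa>" for \<kappa>
    unfolding theta_star_def ts_def PhiEq e_def ..
  have amEq: "argmax_set M B ph r \<tau> \<alpha> k \<gamma> \<theta> = {Y\<in>A. \<forall>Y'\<in>A. u Y' + \<theta> * m Y' \<le> u Y + \<theta> * m Y}" for \<theta>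
    unfolding argmax_set_def A_def[symmetric] using af by auto
  have e0: "0 < e" unfolding e_def by simp
  have eS: "e * S < 1"
  proof -
    have "e * S = exp ((h - \<delta>) * \<tau>)" unfolding e_def S_def by (simp add: mult_exp_exp algebra_simps)
    also have "\<dots> < 1" using \<delta>_h \<tau>_pos unfolding h_def ph_def by (simp add: mult_neg_pos)
    finally show ?thesis .
  qed
  define c where "c = exp (- \<delta> * \<tau>) * \<xi>"
  have c: "0 \<le> c" "c < 1"
  proof -
    show "0 \<le> c" unfolding c_def using \<xi> by simp
    have "c \<le> e * S" unfolding c_def e_def S_def h_def ph_def using \<xi> by (intro mult_left_mono) auto
    then show "c < 1" using eS by linarith
  qed
  define \<kappa> where "\<kappa> = (\<lambda>\<beta>::real. \<beta> / (1 - (1 - \<beta>) * exp (- \<delta> * \<tau>) * \<xi>))"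
  have \<kappa>c: "\<kappa> \<beta> = \<beta> / (1 - (1 - \<beta>) * c)" for \<beta> unfolding \<kappa>_def c_def by (simp add: mult.assoc)
  have G: "Gset M B ph r \<tau> \<alpha> k \<gamma> \<delta> \<xi> \<beta> = m ` {Y\<in>A. \<forall>Y'\<in>A. u Y' + (\<kappa> \<beta> * ts e (\<kappa> \<beta>)) * m Y' \<le> u Y + (\<kappa> \<beta> * ts e (\<kappa> \<beta>)) * m Y}" for \<beta>
    unfolding Gset_def Let_def \<kappa>_def tsEq amEq m_def ..
  have mono_g: "m Y1 \<le> m Y2" if "\<theta>1 < \<theta>2"
    "Y1 \<in> {Y\<in>A. \<forall>Y'\<in>A. u Y' + \<theta>1 * m Y' \<le> u Y + \<theta>1 * m Y}"
    "Y2 \<in> {Y\<in>A. \<forall>Y'\<in>A. u Y' + \<theta>2 * m Y' \<le> u Y + \<theta>2 * m Y}" for \<theta>1 \<theta>2 Y1 Y2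
    using comp_stat[of \<theta>1 \<theta>2 Y1 A u m Y2] that by auto
  have kp: "0 \<le> \<kappa> b1" "\<kappa> b1 < \<kappa> b2" "\<kappa> b2 \<le> 1" if "0 \<le> b1" "b1 < b2" "b2 \<le> 1" for b1 b2
    unfolding \<kappa>c using kappa_props[OF c that] by auto
  show ?thesis
    unfolding ph_def[symmetric] tsEq G
  proof (intro conjI impI allI)
    fix b1 b2 g1 g2 :: real
    assume p: "0 < ts e 0"
    assume H: "0 \<le> b1 \<and> b1 < b2 \<and> b2 \<le> 1 \<and>
      g1 \<in> m ` {Y \<in> A. \<forall>Y'\<in>A. u Y' + \<kappa> b1 * ts e (\<kappa> b1) * m Y' \<le> u Y + \<kappa> b1 * ts e (\<kappa> b1) * m Y} \<and>
      g2 \<in> m ` {Y \<in> A. \<forall>Y'\<in>A. u Y' + \<kappa> b2 * ts e (\<kappa> b2) * m Y' \<le> u Y + \<kappa> b2 * ts e (\<kappa> b2) * m Y}"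
    then obtain Y1 Y2 where Y: "g1 = m Y1" "g2 = m Y2"
      "Y1 \<in> {Y \<in> A. \<forall>Y'\<in>A. u Y' + \<kappa> b1 * ts e (\<kappa> b1) * m Y' \<le> u Y + \<kappa> b1 * ts e (\<kappa> b1) * m Y}"
      "Y2 \<in> {Y \<in> A. \<forall>Y'\<in>A. u Y' + \<kappa> b2 * ts e (\<kappa> b2) * m Y' \<le> u Y + \<kappa> b2 * ts e (\<kappa> b2) * m Y}"
      by blast
    have "\<kappa> b1 * ts e (\<kappa> b1) < \<kappa> b2 * ts e (\<kappa> b2)"
      using ts_strict_pos[OF e0 eS kp[of b1 b2] p] H by auto
    then show "g1 \<le> g2" using mono_g Y by blast
  next
    fix b1 b2 g1 g2 :: real
    assume p: "ts e 0 < 0"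
    assume H: "0 \<le> b1 \<and> b1 < b2 \<and> b2 \<le> 1 \<and>
      g1 \<in> m ` {Y \<in> A. \<forall>Y'\<in>A. u Y' + \<kappa> b1 * ts e (\<kappa> b1) * m Y' \<le> u Y + \<kappa> b1 * ts e (\<kappa> b1) * m Y} \<and>
      g2 \<in> m ` {Y \<in> A. \<forall>Y'\<in>A. u Y' + \<kappa> b2 * ts e (\<kappa> b2) * m Y' \<le> u Y + \<kappa> b2 * ts e (\<kappa> b2) * m Y}"
    then obtain Y1 Y2 where Y: "g1 = m Y1" "g2 = m Y2"
      "Y1 \<in> {Y \<in> A. \<forall>Y'\<in>A. u Y' + \<kappa> b1 * ts e (\<kappa> b1) * m Y' \<le> u Y + \<kappa> b1 * ts e (\<kappa> b1) * m Y}"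
      "Y2 \<in> {Y \<in> A. \<forall>Y'\<in>A. u Y' + \<kappa> b2 * ts e (\<kappa> b2) * m Y' \<le> u Y + \<kappa> b2 * ts e (\<kappa> b2) * m Y}"
      by blast
    have "\<kappa> b2 * ts e (\<kappa> b2) < \<kappa> b1 * ts e (\<kappa> b1)"
      using ts_strict_neg[OF e0 eS kp[of b1 b2] p] H by auto
    then show "g2 \<le> g1" using mono_g Y by blast
  qed
qed

end
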